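(* Let $h:\mathbb{R}\to\mathbb{R}$ be any of the following functions: the sigmoid $h(x)=1/(1+e^{-x})$; $h=\tanh$; $h=\arctan$; the quadratic $h(x)=x^2$; or $h(x)=\lambda x$ for $x\ge0$ and $h(x)=\lambda\alpha(e^x-1)$ for $x<0$, with $\alpha>0$ and either $\lambda=1$ (ELU) or $\lambda>1$ (SELU). Then: (i) there exist $v_1,v_2,v_3,v_4\in\mathbb{R}$ with $h(v_1)h(v_4)=h(v_2)h(v_3)$ and $h(v_1)h\!\left(\frac{v_3+v_4}{2}\right)\ne h(v_3)h\!\left(\frac{v_1+v_2}{2}\right)$; and (ii) there exist $v_1,v_2,u_1,u_2\in\mathbb{R}$ such that $u_1h(v_1)+u_2h(v_2)=\tfrac13$; $h$ is infinitely differentiable at $v_1$ and $v_2$; there is $c>0$ with $|h^{(n)}(v_1)|\le c^nn!$ and $|h^{(n)}(v_2)|\le c^nn!$ for all $n\ge1$; $(u_1h'(v_1))^2+\frac{u_1h''(v_1)}{3}>0$; and $(u_1h'(v_1)u_2h'(v_2))^2<\big((u_1h'(v_1))^2+\frac{u_1h''(v_1)}{3}\big)\big((u_2h'(v_2))^2+\frac{u_2h''(v_2)}{3}\big)$. Consequently, for each such $h$, the one-hidden-layer network risk $\ell((W_j,b_j)_{j=1}^2)=\tfrac12\|W_2h(W_1X+b_1\mathbf{1}_3^T)+b_2\mathbf{1}_3^T-Y\|_F^2$ with $W_1\in\mathbb{R}^{2\times2}$, $b_1\in\mathbb{R}^2$, $W_2\in\mathbb{R}^{1\times2}$, $b_2\in\mathbb{R}$,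 $X=\begin{bmatrix}1&0&\frac12\\0&1&\frac12\end{bmatrix}$, $Y=[0\ 0\ 1]$, has a global minimum with value $0$ and a local minimum with value $\tfrac13$.
   Context: $h^{(n)}$ denotes the $n$-th derivative of $h$; $\mathbf{1}_3$ is the all-ones vector in $\mathbb{R}^3$; $h$ is applied entrywise. *)

theory Defs
  imports "HOL-Analysis.Analysis"
begin

definition sigmoid :: "real \<Rightarrow> real" where
  "sigmoid x = 1 / (1 + exp (- x))"

text \<open>ELU (lam = 1) / SELU (lam > 1) with parameter alpha > 0.\<close>
definition elu :: "real \<Rightarrow> real \<Rightarrow> real \<Rightarrow> real" where
  "elu lam alpha x = (if x \<ge> 0 then lam * x else lam * alpha * (exp x - 1))"

definition Xdata :: "real^3^2" where
  "Xdata = (\<chi> i j. if j = 3 then 1/2 else if i = 1 then (if j = 1 then 1 else 0)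
                                          else (if j = 2 then 1 else 0))"

definition Ydata :: "real^3^1" where
  "Ydata = (\<chi> i j. if j = 3 then 1 else 0)"

text \<open>Risk of the one-hidden-layer network; h applied entrywise; Frobenius norm
  (the norm on real^3^1 is the Frobenius norm).\<close>
definition risk :: "(real \<Rightarrow> real) \<Rightarrow> real^2^2 \<Rightarrow> real^2 \<Rightarrow> real^2^1 \<Rightarrow> real \<Rightarrow> real" where
  "risk h W1 b1 W2 b2 =
     (1/2) * (norm (W2 ** (\<chi> i j. h ((W1 ** Xdata) $ i $ j + b1 $ i))
                  + (\<chi> i j. b2) - Ydata))\<^sup>2"

definition riskp :: "(real \<Rightarrow> real) \<Rightarrow> (real^2^2) \<times> (real^2) \<times> (real^2^1) \<times> real \<Rightarrow> real" where
  "riskp h p = risk h (fst p) (fst (snd p)) (fst (snd (snd p))) (snd (snd (snd p)))"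

definition inf_diff_at :: "(real \<Rightarrow> real) \<Rightarrow> real \<Rightarrow> bool" where
  "inf_diff_at h v \<longleftrightarrow> (\<forall>n. \<forall>\<^sub>F x in nhds v. ((deriv ^^ n) h) field_differentiable (at x))"

end

theory Submission
  imports Defs "HOL-Complex_Analysis.Complex_Analysis"
begin

lemma holo_step:
  fixes G :: "complex \<Rightarrow> complex" and g :: "real \<Rightarrow> real"
  assumes holo: "G holomorphic_on S" and S: "open S" and B: "open B"
    and BS: "\<And>x. x \<in> B \<Longrightarrow> complex_of_real x \<in> S"
    and eq: "\<And>x. x \<in> B \<Longrightarrow> G (of_real x) = of_real (g x)"
    and x: "x \<in> B"
  shows "(g has_real_derivative Re (deriv G (of_real x))) (at x) \<and>
         deriv G (of_real x) = of_real (Re (deriv G (of_real x)))"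
proof -
  define G' where "G' = deriv G (of_real x)"
  have d: "(G has_field_derivative G') (at (of_real x))"
    unfolding G'_def using holomorphic_derivI[OF holo S BS[OF x]] .
  have "((\<lambda>t. G (of_real t)) has_vector_derivative G') (at x)"
    using has_vector_derivative_real_field[OF d] .
  then have re: "((\<lambda>t. Re (G (of_real t))) has_field_derivative Re G') (at x)"
    and im: "((\<lambda>t. Im (G (of_real t))) has_field_derivative Im G') (at x)"
    by (auto simp: has_vector_derivative_complex_iff)
  have 1: "(g has_real_derivative Re G') (at x)"
    by (rule has_field_derivative_transform_within_open[OF re B x]) (simp add: eq)
  have "((\<lambda>t. 0::real) has_field_derivative Im G') (at x)"
    by (rule has_field_derivative_transform_within_open[OF im B x]) (simp add: eq)
  moreover have "((\<lambda>t. 0::real) has_field_derivative 0) (at x)" by simp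
  ultimately have "Im G' = 0" using DERIV_unique by blast
  then have "G' = of_real (Re G')" by (simp add: complex_eq_iff)
  with 1 show ?thesis unfolding G'_def by simp
qed

lemma holo_all:
  fixes F :: "complex \<Rightarrow> complex" and h :: "real \<Rightarrow> real"
  assumes holo: "F holomorphic_on ball (of_real v) r"
    and eq: "\<And>x. x \<in> ball v r \<Longrightarrow> F (of_real x) = of_real (h x)"
  shows "\<forall>x\<in>ball v r. of_real ((deriv^^n) h x) = (deriv^^n) F (of_real x)"
proof (induction n)
  case 0
  then show ?case using eq by simp
next
  case (Suc n)
  have BS: "\<And>x. x \<in> ball v r \<Longrightarrow> complex_of_real x \<in> ball (of_real v) r"
    by (simp add: dist_norm flip: of_real_diff)
  have hol: "(deriv^^n) F holomorphic_on ball (of_real v) r"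
    by (rule holomorphic_higher_deriv[OF holo]) simp
  show ?case
  proof
    fix x assume x: "x \<in> ball v r"
    have eqn: "\<And>y. y \<in> ball v r \<Longrightarrow> (deriv^^n) F (of_real y) = of_real ((deriv^^n) h y)"
      using Suc by simp
    from holo_step[OF hol open_ball open_ball BS eqn x]
    have a: "((deriv^^n) h has_real_derivative Re (deriv ((deriv^^n) F) (of_real x))) (at x)"
      and b: "deriv ((deriv^^n) F) (of_real x) = of_real (Re (deriv ((deriv^^n) F) (of_real x)))"
      by auto
    have "deriv ((deriv^^n) h) x = Re (deriv ((deriv^^n) F) (of_real x))"
      using a by (rule DERIV_imp_deriv)
    then show "of_real ((deriv^^Suc n) h x) = (deriv^^Suc n) F (of_real x)"
      using b by simp
  qed
qed

lemma holo_diff: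
  fixes F :: "complex \<Rightarrow> complex" and h :: "real \<Rightarrow> real"
  assumes holo: "F holomorphic_on ball (of_real v) r"
    and eq: "\<And>x. x \<in> ball v r \<Longrightarrow> F (of_real x) = of_real (h x)"
    and x: "x \<in> ball v r"
  shows "(deriv^^n) h field_differentiable (at x)"
proof -
  have BS: "\<And>x. x \<in> ball v r \<Longrightarrow> complex_of_real x \<in> ball (of_real v) r"
    by (simp add: dist_norm flip: of_real_diff)
  have hol: "(deriv^^n) F holomorphic_on ball (of_real v) r"
    by (rule holomorphic_higher_deriv[OF holo]) simp
  have eqn: "\<And>y. y \<in> ball v r \<Longrightarrow> (deriv^^n) F (of_real y) = of_real ((deriv^^n) h y)"
    using holo_all[OF holo eq, of n] by simp
  from holo_step[OF hol open_ball open_ball BS eqn x] show ?thesis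
    unfolding field_differentiable_def by blast
qed

lemma holo_analytic:
  fixes F :: "complex \<Rightarrow> complex" and h :: "real \<Rightarrow> real"
  assumes holo: "F holomorphic_on ball (of_real v) r" and r: "r > 0"
    and eq: "\<And>x. x \<in> ball v r \<Longrightarrow> F (of_real x) = of_real (h x)"
  shows "inf_diff_at h v \<and> (\<exists>c>0. \<forall>n\<ge>1. \<bar>(deriv ^^ n) h v\<bar> \<le> c ^ n * fact n)"
proof
  show "inf_diff_at h v"
    unfolding inf_diff_at_def
  proof
    fix n
    have "\<forall>\<^sub>F x in nhds v. x \<in> ball v r" using r by (intro eventually_nhds_in_open) auto
    then show "\<forall>\<^sub>F x in nhds v. (deriv ^^ n) h field_differentiable at x"
      by eventually_elim (rule holo_diff[OF holo eq])
  qed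
next
  define \<xi> where "\<xi> = complex_of_real v"
  have sub: "cball \<xi> (r/2) \<subseteq> ball \<xi> r" using r by auto
  have cont: "continuous_on (cball \<xi> (r/2)) F"
    using holomorphic_on_imp_continuous_on[OF holo] sub unfolding \<xi>_def
    by (meson continuous_on_subset)
  have "compact (F ` cball \<xi> (r/2))"
    by (rule compact_continuous_image[OF cont compact_cball])
  then obtain B where B: "\<And>z. z \<in> F ` cball \<xi> (r/2) \<Longrightarrow> norm z \<le> B"
    using compact_imp_bounded bounded_iff by metis
  define B' where "B' = max B 1"
  have B'1: "B' \<ge> 1" unfolding B'_def by simp
  have hol2: "F holomorphic_on ball \<xi> (r/2)"
    using holomorphic_on_subset[OF holo] r unfolding \<xi>_def
    by (metis sub ball_subset_cball order.trans \<xi>_def)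
  show "\<exists>c>0. \<forall>n\<ge>1. \<bar>(deriv ^^ n) h v\<bar> \<le> c ^ n * fact n"
  proof (intro exI[of _ "B' / (r/2)"] conjI allI impI)
    show "B' / (r/2) > 0" using r B'1 by simp
    fix n :: nat assume n: "n \<ge> 1"
    have ci: "norm ((deriv ^^ n) F \<xi>) \<le> fact n * B / (r/2)^n"
    proof (rule Cauchy_inequality[OF hol2 cont])
      show "0 < r/2" using r by simp
      fix x assume "norm (\<xi> - x) = r/2"
      then have "x \<in> cball \<xi> (r/2)" by (simp add: dist_norm)
      then show "norm (F x) \<le> B" using B by blast
    qed
    have "v \<in> ball v r" using r by simp
    then have "of_real ((deriv^^n) h v) = (deriv^^n) F \<xi>"
      using holo_all[OF holo eq, of n] unfolding \<xi>_def by blast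
    then have "\<bar>(deriv ^^ n) h v\<bar> = norm ((deriv ^^ n) F \<xi>)"
      by (metis norm_of_real)
    also have "\<dots> \<le> fact n * B / (r/2)^n" by (rule ci)
    also have "\<dots> \<le> fact n * B'^n / (r/2)^n"
    proof -
      have "B \<le> B'" unfolding B'_def by simp
      also have "B' = B'^1" by simp
      also have "\<dots> \<le> B'^n" using B'1 n by (intro power_increasing) auto
      finally show ?thesis using r by (intro divide_right_mono mult_left_mono) auto
    qed
    also have "\<dots> = (B' / (r/2))^n * fact n" by (simp add: power_divide)
    finally show "\<bar>(deriv ^^ n) h v\<bar> \<le> (B' / (r/2)) ^ n * fact n" .
  qed
qed

lemma alg_ii:
  fixes a d s :: real
  assumes a: "a \<noteq> 0" and s: "s \<noteq> 0" and key: "d^2 + a * s > 0"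
  shows "\<exists>u1 u2. u1 * a + u2 * a = 1/3 \<and> (u1 * d)\<^sup>2 + u1 * s / 3 > 0 \<and>
        (u1 * d * u2 * d)\<^sup>2 < ((u1 * d)\<^sup>2 + u1 * s / 3) * ((u2 * d)\<^sup>2 + u2 * s / 3)"
proof -
  define m where "m = 1/(3*a)"
  have m0: "m \<noteq> 0" using a unfolding m_def by simp
  have mm: "m * m > 0" using m0 by (cases "m > 0") (auto intro: mult_pos_pos mult_neg_neg)
  obtain u1 where u1s: "u1 * s > 0" and u2m: "(m - u1) * m > 0"
  proof (cases "m * s > 0")
    case True
    have "m / 2 * s > 0" using True by simp
    moreover have "(m - m/2) * m > 0" using mm by simp
    ultimately show ?thesis by (rule that)
  next
    case False
    then have ms: "m * s < 0" using m0 s by (simp add: not_less order.order_iff_strict)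
    have "(- m) * s > 0" using ms by simp
    moreover have "(m - (-m)) * m > 0" using mm by simp
    ultimately show ?thesis by (rule that)
  qed
  define u2 where "u2 = m - u1"
  have sum: "u1 * a + u2 * a = 1/3" unfolding u2_def m_def using a by (simp add: field_simps)
  have B1: "(u1 * d)\<^sup>2 + u1 * s / 3 > 0"
  proof -
    have "(u1 * d)\<^sup>2 \<ge> 0" by simp
    then show ?thesis using u1s by linarith
  qed
  have id: "((u1 * d)\<^sup>2 + u1 * s / 3) * ((u2 * d)\<^sup>2 + u2 * s / 3) - (u1 * d * u2 * d)\<^sup>2
      = (u1 * s) * (u2 * m) * (d^2 + a * s) / 3"
  proof -
    have ma: "m * a = 1/3" unfolding m_def using a by simp
    have "((u1 * d)\<^sup>2 + u1 * s / 3) * ((u2 * d)\<^sup>2 + u2 * s / 3) - (u1 * d * u2 * d)\<^sup>2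
        = u1 * u2 * (s/3) * (d^2 * (u1 + u2) + s/3)"
      by (simp add: power2_eq_square algebra_simps)
    also have "u1 + u2 = m" unfolding u2_def by simp
    also have "d^2 * m + s/3 = m * (d^2 + a * s)"
      using ma by (simp add: algebra_simps)
    finally show ?thesis by (simp add: algebra_simps)
  qed
  have "(u1 * s) * (u2 * m) * (d^2 + a * s) / 3 > 0"
    using u1s u2m key unfolding u2_def by simp
  with id have "(u1 * d * u2 * d)\<^sup>2 < ((u1 * d)\<^sup>2 + u1 * s / 3) * ((u2 * d)\<^sup>2 + u2 * s / 3)"
    by linarith
  with sum B1 show ?thesis by blast
qed

lemma part_ii:
  fixes h :: "real \<Rightarrow> real"
  assumes an: "inf_diff_at h v \<and> (\<exists>c>0. \<forall>n\<ge>1. \<bar>(deriv ^^ n) h v\<bar> \<le> c ^ n * fact n)"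
    and a: "h v \<noteq> 0" and s: "(deriv ^^ 2) h v \<noteq> 0"
    and key: "(deriv h v)^2 + h v * (deriv ^^ 2) h v > 0"
  shows "\<exists>v1 v2 u1 u2 :: real.
        u1 * h v1 + u2 * h v2 = 1/3 \<and>
        inf_diff_at h v1 \<and> inf_diff_at h v2 \<and>
        (\<exists>c > 0. \<forall>n \<ge> 1. \<bar>(deriv ^^ n) h v1\<bar> \<le> c ^ n * fact n \<and>
                          \<bar>(deriv ^^ n) h v2\<bar> \<le> c ^ n * fact n) \<and>
        (u1 * deriv h v1)\<^sup>2 + u1 * (deriv ^^ 2) h v1 / 3 > 0 \<and>
        (u1 * deriv h v1 * u2 * deriv h v2)\<^sup>2 <
          ((u1 * deriv h v1)\<^sup>2 + u1 * (deriv ^^ 2) h v1 / 3) *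
          ((u2 * deriv h v2)\<^sup>2 + u2 * (deriv ^^ 2) h v2 / 3)"
proof -
  obtain u1 u2 where u: "u1 * h v + u2 * h v = 1/3" "(u1 * deriv h v)\<^sup>2 + u1 * (deriv ^^ 2) h v / 3 > 0"
     "(u1 * deriv h v * u2 * deriv h v)\<^sup>2 < ((u1 * deriv h v)\<^sup>2 + u1 * (deriv ^^ 2) h v / 3) *
          ((u2 * deriv h v)\<^sup>2 + u2 * (deriv ^^ 2) h v / 3)"
    using alg_ii[OF a s key] by blast
  show ?thesis
    by (rule exI[of _ v], rule exI[of _ v], rule exI[of _ u1], rule exI[of _ u2]) (use an u in auto)
qed

definition outp :: "(real \<Rightarrow> real) \<Rightarrow> real^2^2 \<Rightarrow> real^2 \<Rightarrow> real^2^1 \<Rightarrow> real \<Rightarrow> real \<Rightarrow> real \<Rightarrow> real" where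
  "outp h W1 b1 W2 b2 p q = W2$1$1 * h (W1$1$1 * p + W1$1$2 * q + b1$1) + W2$1$2 * h (W1$2$1 * p + W1$2$2 * q + b1$2) + b2"

lemma X_entries: "Xdata$1$1 = 1" "Xdata$1$2 = 0" "Xdata$1$3 = 1/2"
   "Xdata$2$1 = 0" "Xdata$2$2 = 1" "Xdata$2$3 = 1/2"
  "Ydata$1$1 = 0" "Ydata$1$2 = 0" "Ydata$1$3 = 1"
  by (simp_all add: Xdata_def Ydata_def)

lemma risk_eq:
  "risk h W1 b1 W2 b2 = 1/2 * ((outp h W1 b1 W2 b2 1 0)\<^sup>2 + (outp h W1 b1 W2 b2 0 1)\<^sup>2
      + (outp h W1 b1 W2 b2 (1/2) (1/2) - 1)\<^sup>2)"
proof -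
  have n: "\<And>M :: real^3^1. (norm M)\<^sup>2 = (M$1$1)\<^sup>2 + (M$1$2)\<^sup>2 + (M$1$3)\<^sup>2"
    unfolding power2_norm_eq_inner by (simp add: inner_vec_def sum_3 power2_eq_square)
  show ?thesis
    unfolding risk_def n
    by (simp add: matrix_matrix_mult_def sum_2 X_entries outp_def algebra_simps)
qed

lemma risk_nonneg: "riskp h p \<ge> 0"
  unfolding riskp_def risk_def by simp

lemma sos_bound:
  fixes o1 o2 o3 :: real
  assumes "o1 + o2 - 2 * o3 \<ge> 0"
  shows "1/2 * (o1\<^sup>2 + o2\<^sup>2 + (o3 - 1)\<^sup>2) \<ge> 1/3"
proof -
  have id: "6 * (o1\<^sup>2 + o2\<^sup>2 + (o3 - 1)\<^sup>2) = (o1 + o2 - 2*(o3 - 1))\<^sup>2 + (o1 - o2)\<^sup>2 + ((o3 - 1) + 2 * o1)\<^sup>2 + ((o3-1) + 2 * o2)\<^sup>2"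
    by (simp add: power2_eq_square algebra_simps)
  have "(o1 + o2 - 2*(o3 - 1))\<^sup>2 \<ge> 2\<^sup>2"
    using assms by (intro power_mono) auto
  then have "(o1 + o2 - 2*(o3 - 1))\<^sup>2 \<ge> 4" by simp
  moreover have "(o1 - o2)\<^sup>2 \<ge> 0" "((o3 - 1) + 2 * o1)\<^sup>2 \<ge> 0" "((o3-1) + 2 * o2)\<^sup>2 \<ge> 0" by simp_all
  ultimately show ?thesis using id by linarith
qed

lemma global_min:
  assumes J: "h 0 + h (-2) - 2 * h (-1) \<noteq> 0"
  shows "\<exists>p. riskp h p = 0 \<and> (\<forall>q. riskp h p \<le> riskp h q)"
proof -
  define w where "w = 1 / (2 * h (-1) - h 0 - h (-2))"
  define W1 :: "real^2^2" where "W1 = (\<chi> i j. if i = j then 0 else -2)"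
  define b1 :: "real^2" where "b1 = (\<chi> i. 0)"
  define W2 :: "real^2^1" where "W2 = (\<chi> i j. w)"
  define b2 where "b2 = - w * (h 0 + h (-2))"
  have W1e: "W1$1$1 = 0" "W1$1$2 = -2" "W1$2$1 = -2" "W1$2$2 = 0" unfolding W1_def by simp_all
  have nz: "2 * h (-1) - h 0 - h (-2) \<noteq> 0" using J by linarith
  have o1: "outp h W1 b1 W2 b2 1 0 = 0" "outp h W1 b1 W2 b2 0 1 = 0"
    by (simp_all add: outp_def W1e b1_def W2_def b2_def algebra_simps)
  have o3: "outp h W1 b1 W2 b2 (1/2) (1/2) = 1"
  proof -
    have "outp h W1 b1 W2 b2 (1/2) (1/2) = w * (2 * h (-1) - h 0 - h (-2))"
      by (simp add: outp_def W1e b1_def W2_def b2_def algebra_simps)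
    then show ?thesis using nz unfolding w_def by simp
  qed
  have "riskp h (W1, b1, W2, b2) = 0"
    unfolding riskp_def by (simp add: risk_eq o1 o3)
  then show ?thesis using risk_nonneg by (metis)
qed

lemma local_min:
  assumes conv: "\<And>a b. a < 0 \<Longrightarrow> b < 0 \<Longrightarrow> 2 * h ((a + b)/2) \<le> h a + h b"
  shows "\<exists>p. riskp h p = 1/3 \<and> (\<forall>\<^sub>F q in nhds p. riskp h p \<le> riskp h q)"
proof -
  define W1 :: "real^2^2" where "W1 = 0"
  define b1 :: "real^2" where "b1 = (\<chi> i. -1)"
  define W2 :: "real^2^1" where "W2 = (\<chi> i j. 1)"
  define b2 where "b2 = 1/3 - 2 * h (-1)"
  define p0 where "p0 = (W1, b1, W2, b2)"
  have val: "riskp h p0 = 1/3"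
    unfolding riskp_def p0_def by (simp add: risk_eq outp_def W1_def b1_def W2_def b2_def power2_eq_square)
  have ev1: "\<forall>\<^sub>F q in nhds p0. \<forall>k m. fst q $ k $ m + fst (snd q) $ k < 0"
  proof (intro eventually_all_finite)
    fix k m
    have "((\<lambda>q. fst q $ k $ m + fst (snd q) $ k) \<longlongrightarrow> fst p0 $ k $ m + fst (snd p0) $ k) (nhds p0)"
      by (intro tendsto_intros filterlim_ident)
    moreover have "fst p0 $ k $ m + fst (snd p0) $ k = -1" by (simp add: p0_def W1_def b1_def)
    ultimately have "((\<lambda>q. fst q $ k $ m + fst (snd q) $ k) \<longlongrightarrow> -1) (nhds p0)" by simp
    from order_tendstoD(2)[OF this, of 0]
    show "\<forall>\<^sub>F q in nhds p0. fst q $ k $ m + fst (snd q) $ k < 0" by simp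
  qed
  have ev2: "\<forall>\<^sub>F q in nhds p0. \<forall>k. fst (snd (snd q)) $ 1 $ k > 0"
  proof (intro eventually_all_finite)
    fix k
    have "((\<lambda>q. fst (snd (snd q)) $ 1 $ k) \<longlongrightarrow> fst (snd (snd p0)) $ 1 $ k) (nhds p0)"
      by (intro tendsto_intros filterlim_ident)
    moreover have "fst (snd (snd p0)) $ 1 $ k = 1" by (simp add: p0_def W2_def)
    ultimately have "((\<lambda>q. fst (snd (snd q)) $ 1 $ k) \<longlongrightarrow> 1) (nhds p0)" by simp
    from order_tendstoD(1)[OF this, of 0]
    show "\<forall>\<^sub>F q in nhds p0. fst (snd (snd q)) $ 1 $ k > 0" by simp
  qed
  have "\<forall>\<^sub>F q in nhds p0. riskp h p0 \<le> riskp h q"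
    using ev1 ev2
  proof eventually_elim
    case (elim q)
    obtain A c B d where q: "q = (A, c, B, d)" by (cases q) auto
    define z11 where "z11 = A$1$1 + c$1"
    define z12 where "z12 = A$1$2 + c$1"
    define z21 where "z21 = A$2$1 + c$2"
    define z22 where "z22 = A$2$2 + c$2"
    have z: "z11 < 0" "z12 < 0" "z21 < 0" "z22 < 0"
      using elim(1) unfolding q z11_def z12_def z21_def z22_def by auto
    have B: "B$1$1 > 0" "B$1$2 > 0" using elim(2) unfolding q by auto
    have o1: "outp h A c B d 1 0 = B$1$1 * h z11 + B$1$2 * h z21 + d"
      by (simp add: outp_def z11_def z21_def)
    have o2: "outp h A c B d 0 1 = B$1$1 * h z12 + B$1$2 * h z22 + d"
      by (simp add: outp_def z12_def z22_def)
    have o3: "outp h A c B d (1/2) (1/2) = B$1$1 * h ((z11 + z12)/2) + B$1$2 * h ((z21 + z22)/2) + d"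
      by (simp add: outp_def z11_def z12_def z21_def z22_def algebra_simps add_divide_distrib)
    have c1: "B$1$1 * (2 * h ((z11 + z12)/2)) \<le> B$1$1 * (h z11 + h z12)"
      using conv[OF z(1,2)] B(1) by (intro mult_left_mono) auto
    have c2: "B$1$2 * (2 * h ((z21 + z22)/2)) \<le> B$1$2 * (h z21 + h z22)"
      using conv[OF z(3,4)] B(2) by (intro mult_left_mono) auto
    have "outp h A c B d 1 0 + outp h A c B d 0 1 - 2 * outp h A c B d (1/2) (1/2) \<ge> 0"
      unfolding o1 o2 o3 using c1 c2 by (simp add: algebra_simps)
    from sos_bound[OF this] show ?case
      unfolding val by (simp add: riskp_def q risk_eq)
  qed
  with val show ?thesis by blast
qed

lemma mid_conv_deriv:
  fixes h h' :: "real \<Rightarrow> real"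
  assumes d: "\<And>x. x < 0 \<Longrightarrow> (h has_real_derivative h' x) (at x)"
    and m: "\<And>x y. x < 0 \<Longrightarrow> y < 0 \<Longrightarrow> x \<le> y \<Longrightarrow> h' x \<le> h' y"
    and a: "a < 0" and b: "b < 0"
  shows "2 * h ((a + b)/2) \<le> h a + h b"
proof -
  have "convex_on {..<0} h"
    by (rule convex_on_realI[where f'=h']) (use d m in auto)
  from convex_onD[OF this, of "1/2" a b] a b
  have "h ((1 - 1/2) *\<^sub>R a + (1/2) *\<^sub>R b) \<le> (1 - 1/2) * h a + (1/2) * h b" by simp
  moreover have "(1 - 1/2) *\<^sub>R a + (1/2) *\<^sub>R b = (a + b)/2" by simp
  ultimately have "h ((a + b)/2) \<le> (1/2) * h a + (1/2) * h b" by (simp add: add_divide_distrib)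
  then show ?thesis by linarith
qed

lemma assemble:
  fixes h :: "real \<Rightarrow> real" and F :: "complex \<Rightarrow> complex"
  assumes i: "\<exists>v1 v2 v3 v4 :: real. h v1 * h v4 = h v2 * h v3 \<and>
        h v1 * h ((v3 + v4) / 2) \<noteq> h v3 * h ((v1 + v2) / 2)"
    and J: "h 0 + h (-2) - 2 * h (-1) \<noteq> 0"
    and conv: "\<And>a b. a < 0 \<Longrightarrow> b < 0 \<Longrightarrow> 2 * h ((a + b)/2) \<le> h a + h b"
    and holo: "F holomorphic_on ball (of_real v) r" and r: "r > 0"
    and eq: "\<And>x. x \<in> ball v r \<Longrightarrow> F (of_real x) = of_real (h x)"
    and a: "h v \<noteq> 0" and s: "(deriv ^^ 2) h v \<noteq> 0"
    and key: "(deriv h v)^2 + h v * (deriv ^^ 2) h v > 0"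
  shows
    "(\<exists>v1 v2 v3 v4 :: real. h v1 * h v4 = h v2 * h v3 \<and>
        h v1 * h ((v3 + v4) / 2) \<noteq> h v3 * h ((v1 + v2) / 2))
   \<and> (\<exists>v1 v2 u1 u2 :: real.
        u1 * h v1 + u2 * h v2 = 1/3 \<and>
        inf_diff_at h v1 \<and> inf_diff_at h v2 \<and>
        (\<exists>c > 0. \<forall>n \<ge> 1. \<bar>(deriv ^^ n) h v1\<bar> \<le> c ^ n * fact n \<and>
                          \<bar>(deriv ^^ n) h v2\<bar> \<le> c ^ n * fact n) \<and>
        (u1 * deriv h v1)\<^sup>2 + u1 * (deriv ^^ 2) h v1 / 3 > 0 \<and>
        (u1 * deriv h v1 * u2 * deriv h v2)\<^sup>2 <
          ((u1 * deriv h v1)\<^sup>2 + u1 * (deriv ^^ 2) h v1 / 3) *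
          ((u2 * deriv h v2)\<^sup>2 + u2 * (deriv ^^ 2) h v2 / 3))
   \<and> (\<exists>p. riskp h p = 0 \<and> (\<forall>q. riskp h p \<le> riskp h q))
   \<and> (\<exists>p. riskp h p = 1/3 \<and> (\<forall>\<^sub>F q in nhds p. riskp h p \<le> riskp h q))"
  using i part_ii[OF holo_analytic[OF holo r eq] a s key] global_min[OF J] local_min[OF conv]
  by blast

lemma case_sq:
  defines "h \<equiv> (\<lambda>x::real. x\<^sup>2)"
  shows
    "(\<exists>v1 v2 v3 v4 :: real. h v1 * h v4 = h v2 * h v3 \<and>
        h v1 * h ((v3 + v4) / 2) \<noteq> h v3 * h ((v1 + v2) / 2))
   \<and> (\<exists>v1 v2 u1 u2 :: real.
        u1 * h v1 + u2 * h v2 = 1/3 \<and>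
        inf_diff_at h v1 \<and> inf_diff_at h v2 \<and>
        (\<exists>c > 0. \<forall>n \<ge> 1. \<bar>(deriv ^^ n) h v1\<bar> \<le> c ^ n * fact n \<and>
                          \<bar>(deriv ^^ n) h v2\<bar> \<le> c ^ n * fact n) \<and>
        (u1 * deriv h v1)\<^sup>2 + u1 * (deriv ^^ 2) h v1 / 3 > 0 \<and>
        (u1 * deriv h v1 * u2 * deriv h v2)\<^sup>2 <
          ((u1 * deriv h v1)\<^sup>2 + u1 * (deriv ^^ 2) h v1 / 3) *
          ((u2 * deriv h v2)\<^sup>2 + u2 * (deriv ^^ 2) h v2 / 3))
   \<and> (\<exists>p. riskp h p = 0 \<and> (\<forall>q. riskp h p \<le> riskp h q))
   \<and> (\<exists>p. riskp h p = 1/3 \<and> (\<forall>\<^sub>F q in nhds p. riskp h p \<le> riskp h q))"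
proof (rule assemble[where F="\<lambda>z. z\<^sup>2" and v=1 and r=1])
  show "\<exists>v1 v2 v3 v4 :: real. h v1 * h v4 = h v2 * h v3 \<and>
        h v1 * h ((v3 + v4) / 2) \<noteq> h v3 * h ((v1 + v2) / 2)"
    by (rule exI[of _ 1], rule exI[of _ 1], rule exI[of _ "-1"], rule exI[of _ 1]) (simp add: h_def)
  show "h 0 + h (-2) - 2 * h (-1) \<noteq> 0" by (simp add: h_def)
  show "2 * h ((a + b)/2) \<le> h a + h b" for a b
  proof -
    have "(a - b)\<^sup>2 \<ge> 0" by simp
    then show ?thesis by (simp add: h_def power2_eq_square field_simps)
  qed
  show "(\<lambda>z. z\<^sup>2) holomorphic_on ball (complex_of_real 1) 1" by (intro holomorphic_intros)
  show "(0::real) < 1" by simp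
  show "(complex_of_real x)\<^sup>2 = complex_of_real (h x)" for x by (simp add: h_def)
  have dh: "deriv h = (\<lambda>x. 2 * x)"
  proof
    fix x show "deriv h x = 2 * x" unfolding h_def
      by (rule DERIV_imp_deriv) (auto intro!: derivative_eq_intros)
  qed
  have d2: "(deriv ^^ 2) h 1 = 2"
  proof -
    have "(deriv ^^ 2) h 1 = deriv (\<lambda>x. 2 * x) 1" by (simp add: dh numeral_2_eq_2)
    also have "\<dots> = 2" by (rule DERIV_imp_deriv) (auto intro!: derivative_eq_intros)
    finally show ?thesis .
  qed
  show "h 1 \<noteq> 0" by (simp add: h_def)
  show "(deriv ^^ 2) h 1 \<noteq> 0" by (simp add: d2)
  have h1: "h 1 = 1" by (simp add: h_def)
  show "(deriv h 1)\<^sup>2 + h 1 * (deriv ^^ 2) h 1 > 0" by (simp add: d2 dh h1)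
qed

lemma case_elu:
  fixes lam alpha :: real
  assumes al: "alpha > 0" and la: "lam > 0"
  defines "h \<equiv> elu lam alpha"
  shows
    "(\<exists>v1 v2 v3 v4 :: real. h v1 * h v4 = h v2 * h v3 \<and>
        h v1 * h ((v3 + v4) / 2) \<noteq> h v3 * h ((v1 + v2) / 2))
   \<and> (\<exists>v1 v2 u1 u2 :: real.
        u1 * h v1 + u2 * h v2 = 1/3 \<and>
        inf_diff_at h v1 \<and> inf_diff_at h v2 \<and>
        (\<exists>c > 0. \<forall>n \<ge> 1. \<bar>(deriv ^^ n) h v1\<bar> \<le> c ^ n * fact n \<and>
                          \<bar>(deriv ^^ n) h v2\<bar> \<le> c ^ n * fact n) \<and>
        (u1 * deriv h v1)\<^sup>2 + u1 * (deriv ^^ 2) h v1 / 3 > 0 \<and>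
        (u1 * deriv h v1 * u2 * deriv h v2)\<^sup>2 <
          ((u1 * deriv h v1)\<^sup>2 + u1 * (deriv ^^ 2) h v1 / 3) *
          ((u2 * deriv h v2)\<^sup>2 + u2 * (deriv ^^ 2) h v2 / 3))
   \<and> (\<exists>p. riskp h p = 0 \<and> (\<forall>q. riskp h p \<le> riskp h q))
   \<and> (\<exists>p. riskp h p = 1/3 \<and> (\<forall>\<^sub>F q in nhds p. riskp h p \<le> riskp h q))"
proof (rule assemble[where F="\<lambda>z. of_real (lam * alpha) * (exp z - 1)" and v="-1/4" and r="1/4"])
  define k where "k = lam * alpha"
  have k: "k > 0" unfolding k_def using al la by simp
  have hneg: "x < 0 \<Longrightarrow> h x = k * (exp x - 1)" for x
    unfolding h_def elu_def k_def by simp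
  have hpos: "x \<ge> 0 \<Longrightarrow> h x = lam * x" for x
    unfolding h_def elu_def by simp
  have dneg: "(h has_real_derivative k * exp x) (at x)" if x: "x < 0" for x
  proof (rule has_field_derivative_transform_within_open[where S="{..<0}"])
    show "((\<lambda>x. k * (exp x - 1)) has_real_derivative k * exp x) (at x)"
      by (auto intro!: derivative_eq_intros)
  qed (use x hneg in auto)
  have u: "exp (-1::real) < 1" "exp (-1::real) > 0" by simp_all
  have e2: "exp (-2::real) = exp (-1) * exp (-1)" by (simp flip: exp_add)
  show "\<exists>v1 v2 v3 v4 :: real. h v1 * h v4 = h v2 * h v3 \<and>
        h v1 * h ((v3 + v4) / 2) \<noteq> h v3 * h ((v1 + v2) / 2)"
  proof (rule exI[of _ 2], rule exI[of _ 0], rule exI[of _ "-2"], rule exI[of _ 0], intro conjI)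
    show "h 2 * h 0 = h 0 * h (- 2)" by (simp add: hpos)
    have "h 2 * h ((-2 + 0)/2) - h (-2) * h ((2 + 0)/2) = - (lam * k) * (exp (-1) - 1)\<^sup>2"
      by (simp add: hpos hneg e2 power2_eq_square algebra_simps)
    moreover have "(exp (-1::real) - 1)\<^sup>2 > 0" using u by simp
    ultimately show "h 2 * h ((-2 + 0)/2) \<noteq> h (-2) * h ((2 + 0)/2)"
      using k la by (auto simp: mult_pos_pos)
  qed
  show "h 0 + h (-2) - 2 * h (-1) \<noteq> 0"
  proof -
    have "h 0 + h (-2) - 2 * h (-1) = k * (exp (-1) - 1)\<^sup>2"
      by (simp add: hpos hneg e2 power2_eq_square algebra_simps)
    moreover have "(exp (-1::real) - 1)\<^sup>2 > 0" using u by simp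
    ultimately show ?thesis using k by simp
  qed
  show "2 * h ((a + b)/2) \<le> h a + h b" if "a < 0" "b < 0" for a b
    by (rule mid_conv_deriv[where h'="\<lambda>x. k * exp x"]) (use that dneg k in auto)
  show "(\<lambda>z. of_real (lam * alpha) * (exp z - 1)) holomorphic_on ball (complex_of_real (-1/4)) (1/4)"
    by (intro holomorphic_intros)
  show "(0::real) < 1/4" by simp
  show "complex_of_real (lam * alpha) * (exp (complex_of_real x) - 1) = complex_of_real (h x)"
    if "x \<in> ball (-1/4) (1/4)" for x
  proof -
    have "dist x (-1/4) < 1/4" using that by (simp add: dist_commute)
    then have "\<bar>x - (-1/4)\<bar> < 1/4" by (simp only: dist_real_def)
    then have "x < 0" using abs_diff_less_iff[of x "-1/4" "1/4"] by linarith
    then show ?thesis by (simp add: hneg k_def exp_of_real)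
  qed
  have dh: "deriv h x = k * exp x" if "x < 0" for x
    using dneg[OF that] by (rule DERIV_imp_deriv)
  have d2: "(deriv ^^ 2) h (-1/4) = k * exp (-1/4)"
  proof -
    have "(deriv ^^ 2) h (-1/4) = deriv (deriv h) (-1/4)" by (simp add: numeral_2_eq_2)
    also have "\<dots> = deriv (\<lambda>x. k * exp x) (-1/4)"
    proof (rule deriv_cong_ev)
      have "\<forall>\<^sub>F x in nhds (-1/4::real). x \<in> {..<0}" by (intro eventually_nhds_in_open) auto
      then show "\<forall>\<^sub>F x in nhds (-1/4::real). deriv h x = k * exp x"
        by eventually_elim (simp add: dh)
    qed simp
    also have "\<dots> = k * exp (-1/4)" by (rule DERIV_imp_deriv) (auto intro!: derivative_eq_intros)
    finally show ?thesis .
  qed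
  have e4: "exp (-1/4::real) < 1" "exp (-1/4::real) \<ge> 3/4"
    using exp_ge_add_one_self[of "-1/4::real"] by simp_all
  show "h (-1/4) \<noteq> 0" using e4 k by (simp add: hneg)
  show "(deriv ^^ 2) h (-1/4) \<noteq> 0" using k d2 by simp
  show "(deriv h (-1/4))\<^sup>2 + h (-1/4) * (deriv ^^ 2) h (-1/4) > 0"
  proof -
    have "(deriv h (-1/4))\<^sup>2 + h (-1/4) * (deriv ^^ 2) h (-1/4)
        = (k * k) * exp (-1/4) * (2 * exp (-1/4) - 1)"
    proof -
      have dv: "deriv h (-1/4) = k * exp (-1/4)" by (rule dh) simp
      have hv: "h (-1/4) = k * (exp (-1/4) - 1)" by (rule hneg) simp
      show ?thesis unfolding dv hv d2 by (simp add: power2_eq_square algebra_simps)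
    qed
    moreover have "(k * k) * exp (-1/4::real) * (2 * exp (-1/4) - 1) > 0"
      using k e4 by (intro mult_pos_pos) auto
    ultimately show ?thesis by simp
  qed
qed

lemma case_arctan:
  defines "h \<equiv> arctan"
  shows
    "(\<exists>v1 v2 v3 v4 :: real. h v1 * h v4 = h v2 * h v3 \<and>
        h v1 * h ((v3 + v4) / 2) \<noteq> h v3 * h ((v1 + v2) / 2))
   \<and> (\<exists>v1 v2 u1 u2 :: real.
        u1 * h v1 + u2 * h v2 = 1/3 \<and>
        inf_diff_at h v1 \<and> inf_diff_at h v2 \<and>
        (\<exists>c > 0. \<forall>n \<ge> 1. \<bar>(deriv ^^ n) h v1\<bar> \<le> c ^ n * fact n \<and>
                          \<bar>(deriv ^^ n) h v2\<bar> \<le> c ^ n * fact n) \<and>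
        (u1 * deriv h v1)\<^sup>2 + u1 * (deriv ^^ 2) h v1 / 3 > 0 \<and>
        (u1 * deriv h v1 * u2 * deriv h v2)\<^sup>2 <
          ((u1 * deriv h v1)\<^sup>2 + u1 * (deriv ^^ 2) h v1 / 3) *
          ((u2 * deriv h v2)\<^sup>2 + u2 * (deriv ^^ 2) h v2 / 3))
   \<and> (\<exists>p. riskp h p = 0 \<and> (\<forall>q. riskp h p \<le> riskp h q))
   \<and> (\<exists>p. riskp h p = 1/3 \<and> (\<forall>\<^sub>F q in nhds p. riskp h p \<le> riskp h q))"
proof (rule assemble[where F="Arctan" and v="1/2" and r="1/2"])
  define A where "A = arctan (2::real)"
  have A1: "arctan (1/2::real) = pi/2 - A" unfolding A_def using arctan_inverse[of "2::real"] by simp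
  have A2: "A > pi/4" unfolding A_def using arctan_less_iff[of 1 2] by (simp add: arctan_one)
  have A3: "A < pi/2" unfolding A_def by (rule arctan_ubound)
  show "\<exists>v1 v2 v3 v4 :: real. h v1 * h v4 = h v2 * h v3 \<and>
        h v1 * h ((v3 + v4) / 2) \<noteq> h v3 * h ((v1 + v2) / 2)"
  proof (rule exI[of _ 1], rule exI[of _ 0], rule exI[of _ "2"], rule exI[of _ 0], intro conjI)
    show "h 1 * h 0 = h 0 * h 2" by (simp add: h_def)
    have "h 1 * h ((2 + 0)/2) - h 2 * h ((1 + 0)/2) = (A - pi/4)\<^sup>2"
      by (simp add: h_def A1 arctan_one power2_eq_square algebra_simps flip: A_def)
    moreover have "(A - pi/4)\<^sup>2 > 0" using A2 by simp
    ultimately show "h 1 * h ((2 + 0)/2) \<noteq> h 2 * h ((1 + 0)/2)" by auto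
  qed
  show "h 0 + h (-2) - 2 * h (-1) \<noteq> 0"
    using A3 by (simp add: h_def arctan_minus arctan_one flip: A_def)
  show "2 * h ((a + b)/2) \<le> h a + h b" if "a < 0" "b < 0" for a b
  proof (rule mid_conv_deriv[where h'="\<lambda>x. inverse (1 + x\<^sup>2)"])
    show "(h has_real_derivative inverse (1 + x\<^sup>2)) (at x)" for x
      unfolding h_def by (rule DERIV_arctan)
    show "inverse (1 + x\<^sup>2) \<le> inverse (1 + y\<^sup>2)" if "x < 0" "y < 0" "x \<le> y" for x y :: real
    proof -
      have "(x - y) * (x + y) \<ge> 0" using that by (intro mult_nonpos_nonpos) auto
      then have "y\<^sup>2 \<le> x\<^sup>2" by (simp add: power2_eq_square algebra_simps)
      then show ?thesis by (intro le_imp_inverse_le) (auto simp: add_pos_nonneg)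
    qed
  qed (use that in auto)
  show "Arctan holomorphic_on ball (complex_of_real (1/2)) (1/2)"
  proof (rule holomorphic_on_Arctan)
    fix z assume z: "z \<in> ball (complex_of_real (1/2)) (1/2)" and re: "Re z = 0"
    have "\<bar>Re (z - complex_of_real (1/2))\<bar> \<le> cmod (z - complex_of_real (1/2))" by (rule abs_Re_le_cmod)
    also have "\<dots> < 1/2" using z by (simp add: dist_norm norm_minus_commute)
    finally show "\<bar>Im z\<bar> < 1" using re by simp
  qed
  show "(0::real) < 1/2" by simp
  show "Arctan (complex_of_real x) = complex_of_real (h x)" for x
    by (simp add: h_def Arctan_of_real)
  have dh: "deriv h = (\<lambda>x. inverse (1 + x\<^sup>2))"
  proof
    fix x show "deriv h x = inverse (1 + x\<^sup>2)" unfolding h_def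
      by (rule DERIV_imp_deriv) (rule DERIV_arctan)
  qed
  have d2: "(deriv ^^ 2) h (1/2) = -16/25"
  proof -
    have "(deriv ^^ 2) h (1/2) = deriv (\<lambda>x. inverse (1 + x\<^sup>2)) (1/2::real)" by (simp add: dh numeral_2_eq_2)
    also have "\<dots> = -16/25"
      by (rule DERIV_imp_deriv) (auto intro!: derivative_eq_intros simp: power2_eq_square)
    finally show ?thesis .
  qed
  have a0: "arctan (1/2::real) > 0" by simp
  have a1: "arctan (1/2::real) \<le> 1/2" by (rule arctan_le_self) simp
  show "h (1/2) \<noteq> 0" using a0 by (simp add: h_def)
  show "(deriv ^^ 2) h (1/2) \<noteq> 0" by (simp add: d2)
  show "(deriv h (1/2))\<^sup>2 + h (1/2) * (deriv ^^ 2) h (1/2) > 0"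
  proof -
    have hv: "h (1/2) = arctan (1/2)" by (simp add: h_def)
    show ?thesis using a1 by (simp add: d2 dh hv power2_eq_square)
  qed
qed

lemma sig_alt: "sigmoid x = inverse (1 + exp (-x))"
  by (simp add: sigmoid_def inverse_eq_divide)

lemma sig_pos: "sigmoid x > 0"
  by (simp add: sigmoid_def add_pos_pos)

lemma sig_aux: "(D::real) \<noteq> 0 \<Longrightarrow> - (- (D - 1) * inverse (D ^ Suc (Suc 0))) = inverse D - (inverse D)\<^sup>2"
  by (simp add: field_simps power2_eq_square)

lemma sig_J: "(E::real) > 0 \<Longrightarrow> 1/2 + 1/(1+E*E) - 2 * (1/(1+E)) = (E-1)^3/(2*(1+E*E)*(1+E))"
proof -
  assume E: "E > 0"
  have p: "1 + E*E > 0" "1 + E > 0" using E by (simp_all add: add_pos_nonneg)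
  show ?thesis using p by (simp add: field_simps power3_eq_cube)
qed

lemma sig_deriv: "(sigmoid has_real_derivative sigmoid x - (sigmoid x)\<^sup>2) (at x)"
proof -
  have ne: "1 + exp (-x) \<noteq> (0::real)" using exp_gt_zero[of "-x"] by linarith
  have "((\<lambda>x. 1 + exp (-x)) has_real_derivative - exp (-x)) (at x)"
    by (auto intro!: derivative_eq_intros)
  from DERIV_inverse_fun[OF this ne]
  have "((\<lambda>x. inverse (1 + exp (-x))) has_real_derivative - (- exp (- x) * inverse ((1 + exp (- x)) ^ Suc (Suc 0)))) (at x)" .
  moreover have "- (- exp (- x) * inverse ((1 + exp (- x)) ^ Suc (Suc 0))) = sigmoid x - (sigmoid x)\<^sup>2"
  proof -
    show ?thesis unfolding sig_alt using sig_aux[OF ne] by simp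
  qed
  ultimately show ?thesis by (simp add: sig_alt[abs_def])
qed

lemma sig_neg: "x < 0 \<Longrightarrow> sigmoid x < 1/2"
proof -
  assume "x < 0"
  then have "exp (-x) > 1" by simp
  then have A: "1 + exp (-x) > 2" by simp
  have A0: "1 + exp (-x) > 0" using exp_gt_zero[of "-x"] by linarith
  have "1 / (1 + exp (-x)) < 1 / 2" using A A0 by (intro divide_strict_left_mono) auto
  then show ?thesis unfolding sigmoid_def .
qed

lemma sig_mono: "x \<le> y \<Longrightarrow> sigmoid x \<le> sigmoid y"
proof -
  assume "x \<le> y"
  then have "exp (-y) \<le> exp (-x)" by simp
  then have "1 + exp (-y) \<le> 1 + exp (-x)" by simp
  then show ?thesis unfolding sigmoid_def
  proof (rule divide_left_mono)
    have "0 < 1 + exp (-x)" "0 < 1 + exp (-y)" using exp_gt_zero[of "-x"] exp_gt_zero[of "-y"] by linarith+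
    then show "0 < (1 + exp (- x)) * (1 + exp (- y))" by (rule mult_pos_pos)
  qed simp
qed

lemma case_sigmoid:
  defines "h \<equiv> sigmoid"
  shows
    "(\<exists>v1 v2 v3 v4 :: real. h v1 * h v4 = h v2 * h v3 \<and>
        h v1 * h ((v3 + v4) / 2) \<noteq> h v3 * h ((v1 + v2) / 2))
   \<and> (\<exists>v1 v2 u1 u2 :: real.
        u1 * h v1 + u2 * h v2 = 1/3 \<and>
        inf_diff_at h v1 \<and> inf_diff_at h v2 \<and>
        (\<exists>c > 0. \<forall>n \<ge> 1. \<bar>(deriv ^^ n) h v1\<bar> \<le> c ^ n * fact n \<and>
                          \<bar>(deriv ^^ n) h v2\<bar> \<le> c ^ n * fact n) \<and>
        (u1 * deriv h v1)\<^sup>2 + u1 * (deriv ^^ 2) h v1 / 3 > 0 \<and>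
        (u1 * deriv h v1 * u2 * deriv h v2)\<^sup>2 <
          ((u1 * deriv h v1)\<^sup>2 + u1 * (deriv ^^ 2) h v1 / 3) *
          ((u2 * deriv h v2)\<^sup>2 + u2 * (deriv ^^ 2) h v2 / 3))
   \<and> (\<exists>p. riskp h p = 0 \<and> (\<forall>q. riskp h p \<le> riskp h q))
   \<and> (\<exists>p. riskp h p = 1/3 \<and> (\<forall>\<^sub>F q in nhds p. riskp h p \<le> riskp h q))"
proof (rule assemble[where F="\<lambda>z. 1 / (1 + exp (-z))" and v="-1" and r="1"])
  define a where "a = ln (3::real)"
  define b where "b = ln (7::real)"
  have ea: "exp a = 3" "exp b = 7" unfolding a_def b_def by simp_all
  have l3: "exp (2 * a) = 9" "exp (2 * b) = 49" "exp (a + b) = 21"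
  proof -
    have "exp (2 * a) = exp (a + a)" by (simp only: mult_2)
    also have "\<dots> = exp a * exp a" by (rule exp_add)
    also have "\<dots> = 9" using ea by simp
    finally show "exp (2 * a) = 9" .
    have "exp (2 * b) = exp (b + b)" by (simp only: mult_2)
    also have "\<dots> = exp b * exp b" by (rule exp_add)
    also have "\<dots> = 49" using ea by simp
    finally show "exp (2 * b) = 49" .
    have "exp (a + b) = exp a * exp b" by (rule exp_add)
    then show "exp (a + b) = 21" using ea by simp
  qed
  have l3b: "exp (b + a) = 21" by (subst add.commute) (rule l3(3))
  have s0: "sigmoid 0 = 1/2" by (simp add: sigmoid_def)
  have s1: "sigmoid (-(2 * a)) = 1/10" by (simp add: sigmoid_def l3)
  have s2: "sigmoid (-(2 * b)) = 1/50" by (simp add: sigmoid_def l3)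
  have s3: "sigmoid (-(a + b)) = 1/22" by (simp add: sigmoid_def l3 l3b)
  have s4: "sigmoid (-a) = 1/4" by (simp add: sigmoid_def ea)
  show "\<exists>v1 v2 v3 v4 :: real. h v1 * h v4 = h v2 * h v3 \<and>
        h v1 * h ((v3 + v4) / 2) \<noteq> h v3 * h ((v1 + v2) / 2)"
  proof (rule exI[of _ 0], rule exI[of _ "-(2 * a)"], rule exI[of _ "-(2 * a)"],
      rule exI[of _ "-(2 * b)"], intro conjI)
    have m1: "(-(2 * a) + -(2 * b))/2 = - (a + b)" by simp
    have m2: "(0 + -(2 * a))/2 = - a" by simp
    show "h 0 * h (- (2 * b)) = h (- (2 * a)) * h (- (2 * a))"
      unfolding h_def s0 s1 s2 by simp
    show "h 0 * h ((- (2 * a) + - (2 * b)) / 2) \<noteq> h (- (2 * a)) * h ((0 + - (2 * a)) / 2)"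
      unfolding m1 m2 h_def s0 s1 s3 s4 by simp
  qed
  define E where "E = exp (1::real)"
  have E1: "E > 1" unfolding E_def by simp
  have E2: "exp (2::real) = E * E" unfolding E_def by (simp flip: exp_add)
  show "h 0 + h (-2) - 2 * h (-1) \<noteq> 0"
  proof -
    have "h 0 + h (-2) - 2 * h (-1) = 1/2 + 1/(1+E*E) - 2 * (1/(1+E))"
      by (simp add: h_def sigmoid_def E2 flip: E_def)
    also have "\<dots> = (E - 1)^3 / (2 * (1 + E * E) * (1 + E))"
      using E1 by (intro sig_J) simp
    moreover have "(E - 1)^3 / (2 * (1 + E * E) * (1 + E)) > 0"
      using E1 by (intro divide_pos_pos) (auto intro!: mult_pos_pos add_pos_pos)
    ultimately show ?thesis by linarith
  qed
  show "2 * h ((a + b)/2) \<le> h a + h b" if "a < 0" "b < 0" for a b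
  proof (rule mid_conv_deriv[where h'="\<lambda>x. sigmoid x - (sigmoid x)\<^sup>2"])
    show "(h has_real_derivative sigmoid x - (sigmoid x)\<^sup>2) (at x)" for x
      unfolding h_def by (rule sig_deriv)
    show "sigmoid x - (sigmoid x)\<^sup>2 \<le> sigmoid y - (sigmoid y)\<^sup>2"
      if "x < 0" "y < 0" "x \<le> y" for x y :: real
    proof -
      have 1: "sigmoid x \<le> sigmoid y" using that by (intro sig_mono)
      have 2: "sigmoid y < 1/2" using that by (intro sig_neg)
      have "(sigmoid y - sigmoid x) * (1 - sigmoid y - sigmoid x) \<ge> 0"
        using 1 2 by (intro mult_nonneg_nonneg) auto
      then show ?thesis by (simp add: power2_eq_square algebra_simps)
    qed
  qed (use that in auto)
  show "(\<lambda>z. 1 / (1 + exp (-z))) holomorphic_on ball (complex_of_real (-1)) 1"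
  proof (intro holomorphic_intros)
    fix z assume z: "z \<in> ball (complex_of_real (-1)) 1"
    have "\<bar>Im (z - complex_of_real (-1))\<bar> \<le> cmod (z - complex_of_real (-1))" by (rule abs_Im_le_cmod)
    also have "\<dots> < 1" using z by (simp add: dist_norm norm_minus_commute)
    finally have im: "\<bar>Im z\<bar> < 1" by simp
    have "pi / 2 > (1::real)" using pi_gt3 by simp
    then have "cos (Im (-z)) > 0" using im by (intro cos_gt_zero_pi) auto
    then have "Re (exp (-z)) > 0" by (simp add: Re_exp)
    then have R: "Re (1 + exp (-z)) > 0" by simp
    show "1 + exp (-z) \<noteq> 0"
    proof
      assume "1 + exp (-z) = 0"
      then have "Re (1 + exp (-z)) = 0" by (simp only: zero_complex.sel(1))
      with R show False by linarith
    qed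
  qed
  show "(0::real) < 1" by simp
  show "1 / (1 + exp (- complex_of_real x)) = complex_of_real (h x)" for x
  proof -
    have "exp (- complex_of_real x) = complex_of_real (exp (-x))" using exp_of_real[of "-x"] by simp
    then show ?thesis by (simp add: h_def sigmoid_def)
  qed
  have dh: "deriv h = (\<lambda>x. sigmoid x - (sigmoid x)\<^sup>2)"
  proof
    fix x show "deriv h x = sigmoid x - (sigmoid x)\<^sup>2" unfolding h_def
      by (rule DERIV_imp_deriv) (rule sig_deriv)
  qed
  define S where "S = sigmoid (-1)"
  have S: "S > 0" "S < 1/2" unfolding S_def by (rule sig_pos, rule sig_neg, simp)
  have d2: "(deriv ^^ 2) h (-1) = (S - S\<^sup>2) * (1 - 2 * S)"
  proof -
    have "(deriv ^^ 2) h (-1) = deriv (\<lambda>x. sigmoid x - (sigmoid x)\<^sup>2) (-1::real)"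
      by (simp add: dh numeral_2_eq_2)
    also have "\<dots> = (S - S\<^sup>2) - 2 * S * (S - S\<^sup>2)"
    proof (rule DERIV_imp_deriv)
      have "((\<lambda>x. (sigmoid x)\<^sup>2) has_real_derivative 2 * sigmoid (-1) * (sigmoid (-1) - (sigmoid (-1))\<^sup>2)) (at (-1))"
        using DERIV_power[OF sig_deriv[of "-1"], of 2] by (simp add: algebra_simps)
      from DERIV_diff[OF sig_deriv[of "-1"] this]
      show "((\<lambda>x. sigmoid x - (sigmoid x)\<^sup>2) has_real_derivative (S - S\<^sup>2) - 2 * S * (S - S\<^sup>2)) (at (-1))"
        unfolding S_def .
    qed
    also have "\<dots> = (S - S\<^sup>2) * (1 - 2 * S)" by (simp add: algebra_simps)
    finally show ?thesis .
  qed
  have SS: "S - S\<^sup>2 > 0" using S by (simp add: power2_eq_square)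
  have s0: "(S - S\<^sup>2) * (1 - 2 * S) > 0" using SS S by (intro mult_pos_pos) auto
  have a0: "h (-1) > 0" by (simp add: h_def sig_pos)
  show "h (-1) \<noteq> 0" using a0 by simp
  have "(deriv ^^ 2) h (-1) > 0" using s0 d2 by simp
  then show "(deriv ^^ 2) h (-1) \<noteq> 0" by simp
  show "(deriv h (-1))\<^sup>2 + h (-1) * (deriv ^^ 2) h (-1) > 0"
  proof -
    have "h (-1) * (deriv ^^ 2) h (-1) > 0" using a0 s0 d2 by simp
    moreover have "(deriv h (-1))\<^sup>2 \<ge> 0" by simp
    ultimately show ?thesis by linarith
  qed
qed

lemma tanh_of_real_c: "tanh (complex_of_real x) = complex_of_real (tanh x)"
proof -
  have "tanh (complex_of_real x) = (exp (of_real x) - exp (- of_real x)) / (exp (of_real x) + exp (- of_real x))"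
    by (rule tanh_altdef)
  also have "\<dots> = of_real ((exp x - exp (- x)) / (exp x + exp (- x)))"
  proof -
    have "exp (- complex_of_real x) = complex_of_real (exp (-x))" using exp_of_real[of "-x"] by simp
    moreover have "exp (complex_of_real x) = complex_of_real (exp x)" by (rule exp_of_real)
    ultimately show ?thesis by simp
  qed
  also have "(exp x - exp (- x)) / (exp x + exp (- x)) = tanh x"
    by (rule tanh_altdef[symmetric])
  finally show ?thesis .
qed

lemma tanh_u: "tanh (x::real) = (1 - exp (-2 * x)) / (1 + exp (-2 * x))"
  by (rule tanh_real_altdef)

lemma t1: "(u::real) > 0 \<Longrightarrow> u < 1 \<Longrightarrow> ((1-u^2)/(1+u^2)) * ((1-u^2)/(1+u^2)) \<noteq> ((1-u^4)/(1+u^4)) * ((1-u)/(1+u))"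
proof
  assume u: "u > 0" "u < 1"
  assume eq: "((1-u^2)/(1+u^2)) * ((1-u^2)/(1+u^2)) = ((1-u^4)/(1+u^4)) * ((1-u)/(1+u))"
  have "u^2 > 0" "u^4 > 0" using u by simp_all
  then have q: "1 + u^2 > 0" "1 + u^4 > 0" "1 + u > 0" using u by linarith+
  have p: "(1 + u^2) * (1 + u^2) \<noteq> 0" "(1 + u^4) * (1 + u) \<noteq> 0" using q by simp_all
  from eq have "((1-u^2)*(1-u^2)) / ((1+u^2)*(1+u^2)) = ((1-u^4)*(1-u)) / ((1+u^4)*(1+u))"
    unfolding times_divide_times_eq .
  then have e2: "((1-u^2)*(1-u^2)) * ((1+u^4)*(1+u)) = ((1-u^4)*(1-u)) * ((1+u^2)*(1+u^2))"
    using frac_eq_eq[OF p] by simp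
  have id: "((1-u^2)*(1-u^2)) * ((1+u^4)*(1+u)) - ((1-u^4)*(1-u)) * ((1+u^2)*(1+u^2))
     = 2*u*(1-u^2)*(1-u)*(u-1)*(u^3-1)"
    by algebra
  have "u^2 < 1" "u^3 < 1" using u by (simp_all add: power_less_one_iff)
  then have "2*u*(1-u^2)*(1-u)*(u-1)*(u^3-1) \<noteq> 0" using u by auto
  with id e2 show False by simp
qed
lemma t2: "(u::real) > 0 \<Longrightarrow> (- ((1-u^4)/(1+u^4))) - 2 * (-((1-u^2)/(1+u^2))) = (1-u^2)^3/((1+u^2)*(1+u^4))"
proof -
  assume u: "u > 0"
  have p: "1 + u^2 > 0" "1 + u^4 > 0" using u by (simp_all add: add_pos_nonneg)
  show ?thesis using p by (simp add: field_simps) algebra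
qed

lemma case_tanh:
  defines "h \<equiv> tanh"
  shows
    "(\<exists>v1 v2 v3 v4 :: real. h v1 * h v4 = h v2 * h v3 \<and>
        h v1 * h ((v3 + v4) / 2) \<noteq> h v3 * h ((v1 + v2) / 2))
   \<and> (\<exists>v1 v2 u1 u2 :: real.
        u1 * h v1 + u2 * h v2 = 1/3 \<and>
        inf_diff_at h v1 \<and> inf_diff_at h v2 \<and>
        (\<exists>c > 0. \<forall>n \<ge> 1. \<bar>(deriv ^^ n) h v1\<bar> \<le> c ^ n * fact n \<and>
                          \<bar>(deriv ^^ n) h v2\<bar> \<le> c ^ n * fact n) \<and>
        (u1 * deriv h v1)\<^sup>2 + u1 * (deriv ^^ 2) h v1 / 3 > 0 \<and>
        (u1 * deriv h v1 * u2 * deriv h v2)\<^sup>2 <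
          ((u1 * deriv h v1)\<^sup>2 + u1 * (deriv ^^ 2) h v1 / 3) *
          ((u2 * deriv h v2)\<^sup>2 + u2 * (deriv ^^ 2) h v2 / 3))
   \<and> (\<exists>p. riskp h p = 0 \<and> (\<forall>q. riskp h p \<le> riskp h q))
   \<and> (\<exists>p. riskp h p = 1/3 \<and> (\<forall>\<^sub>F q in nhds p. riskp h p \<le> riskp h q))"
proof (rule assemble[where F="tanh" and v="-1/2" and r="1/2"])
  define u where "u = exp (-1::real)"
  have u0: "u > 0" unfolding u_def by simp
  have u1: "u < 1" unfolding u_def by simp
  have u3: "u > 1/3"
  proof -
    have "exp (1::real) < 3" using e_less_272 by simp
    then have "1/3 < 1 / exp (1::real)" by (intro divide_strict_left_mono) auto
    then show ?thesis unfolding u_def by (simp add: exp_minus inverse_eq_divide)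
  qed
  have e2: "exp (-2::real) = u^2" unfolding u_def by (simp add: power2_eq_square flip: exp_add)
  have e4: "exp (-4::real) = u^4"
  proof -
    have "exp (-4::real) = exp (-2 + -2)" by simp
    also have "\<dots> = exp (-2) * exp (-2)" by (rule exp_add)
    finally show ?thesis using e2 by (simp add: power2_eq_square power4_eq_xxxx)
  qed
  have th: "tanh (1/2::real) = (1 - u) / (1 + u)" "tanh (1::real) = (1 - u^2) / (1 + u^2)"
    "tanh (2::real) = (1 - u^4) / (1 + u^4)"
    by (simp_all add: tanh_u e2 e4 flip: u_def)
  show "\<exists>v1 v2 v3 v4 :: real. h v1 * h v4 = h v2 * h v3 \<and>
        h v1 * h ((v3 + v4) / 2) \<noteq> h v3 * h ((v1 + v2) / 2)"
  proof (rule exI[of _ 1], rule exI[of _ 0], rule exI[of _ "2"], rule exI[of _ 0], intro conjI)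
    show "h 1 * h 0 = h 0 * h 2" by (simp add: h_def)
    have "h 1 * h ((2 + 0)/2) = tanh 1 * tanh 1" "h 2 * h ((1 + 0)/2) = tanh 2 * tanh (1/2)"
      by (simp_all add: h_def)
    then show "h 1 * h ((2 + 0)/2) \<noteq> h 2 * h ((1 + 0)/2)"
      using t1[OF u0 u1] unfolding th by simp
  qed
  show "h 0 + h (-2) - 2 * h (-1) \<noteq> 0"
  proof -
    have "h 0 + h (-2) - 2 * h (-1) = (- tanh 2) - 2 * (- tanh 1)" by (simp add: h_def)
    also have "\<dots> = (1 - u^2)^3 / ((1 + u^2) * (1 + u^4))" unfolding th by (rule t2[OF u0])
    moreover have "(1 - u^2)^3 / ((1 + u^2) * (1 + u^4)) > 0"
    proof -
      have "u^2 < 1" using u0 u1 by (simp add: power_less_one_iff)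
      then show ?thesis by (intro divide_pos_pos mult_pos_pos) (auto simp: add_pos_nonneg)
    qed
    ultimately show ?thesis by linarith
  qed
  have dt: "(tanh has_real_derivative 1 - tanh x ^ 2) (at x)" for x :: real
    by (auto intro!: derivative_eq_intros)
  show "2 * h ((a + b)/2) \<le> h a + h b" if "a < 0" "b < 0" for a b
  proof (rule mid_conv_deriv[where h'="\<lambda>x. 1 - tanh x ^ 2"])
    show "(h has_real_derivative 1 - tanh x ^ 2) (at x)" for x
      unfolding h_def by (rule dt)
    show "1 - tanh x ^ 2 \<le> 1 - tanh y ^ 2" if "x < 0" "y < 0" "x \<le> y" for x y :: real
    proof -
      have "tanh x \<le> tanh y" "tanh y < 0" using that by simp_all
      then have "(- tanh y) ^ 2 \<le> (- tanh x) ^ 2" by (intro power_mono) auto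
      then have "tanh y ^ 2 \<le> tanh x ^ 2" by simp
      then show ?thesis by simp
    qed
  qed (use that in auto)
  show "tanh holomorphic_on ball (complex_of_real (-1/2)) (1/2)"
    unfolding holomorphic_on_def
  proof
    fix z assume z: "z \<in> ball (complex_of_real (-1/2)) (1/2)"
    have "\<bar>Im (z - complex_of_real (-1/2))\<bar> \<le> cmod (z - complex_of_real (-1/2))" by (rule abs_Im_le_cmod)
    also have "\<dots> < 1/2" using z by (simp add: dist_norm norm_minus_commute)
    finally have im: "\<bar>Im z\<bar> < 1/2" by simp
    have "pi / 2 > (1::real)" using pi_gt3 by simp
    then have "cos (Im (z + z)) > 0" using im by (intro cos_gt_zero_pi) auto
    then have R: "Re (exp (z + z)) > 0" by (simp add: Re_exp)
    have E: "exp (z + z) = exp z ^ 2" by (simp only: exp_add power2_eq_square)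
    have "exp z ^ 2 \<noteq> -1"
    proof
      assume "exp z ^ 2 = -1"
      then have "Re (exp (z + z)) = -1" by (simp only: E) simp
      with R show False by linarith
    qed
    then have "cosh z \<noteq> 0" by (simp add: cosh_zero_iff)
    then have "(tanh has_field_derivative 1 - tanh z ^ 2) (at z)"
      by (auto intro!: derivative_eq_intros)
    then show "tanh field_differentiable at z within ball (complex_of_real (-1/2)) (1/2)"
      using field_differentiable_at_within field_differentiable_def by blast
  qed
  show "(0::real) < 1/2" by simp
  show "tanh (complex_of_real x) = complex_of_real (h x)" for x
    by (simp add: h_def tanh_of_real_c)
  have dh: "deriv h = (\<lambda>x. 1 - tanh x ^ 2)"
  proof
    fix x show "deriv h x = 1 - tanh x ^ 2" unfolding h_def
      by (rule DERIV_imp_deriv) (rule dt)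
  qed
  define T where "T = tanh (1/2::real)"
  have T: "T > 0" "T < 1/2"
  proof -
    show "T > 0" unfolding T_def by simp
    have "(1 - u) / (1 + u) < 1/2" using u0 u3 by (simp add: divide_simps)
    then show "T < 1/2" unfolding T_def th .
  qed
  have d2: "(deriv ^^ 2) h (-1/2) = 2 * T * (1 - T^2)"
  proof -
    have "(deriv ^^ 2) h (-1/2) = deriv (\<lambda>x. 1 - tanh x ^ 2) (-1/2::real)"
      by (simp add: dh numeral_2_eq_2)
    also have "\<dots> = - (2 * tanh (-1/2) * (1 - tanh (-1/2) ^ 2))"
      by (rule DERIV_imp_deriv) (auto intro!: derivative_eq_intros)
    also have "\<dots> = 2 * T * (1 - T^2)" by (simp add: T_def)
    finally show ?thesis .
  qed
  have hv: "h (-1/2) = - T" by (simp add: h_def T_def)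
  have dv: "deriv h (-1/2) = 1 - T^2" by (simp add: dh T_def)
  have T2: "T^2 < 1/4"
  proof -
    have "T^2 < (1/2)^2" using T by (intro power_strict_mono) auto
    then show ?thesis by (simp add: power2_eq_square)
  qed
  show "h (-1/2) \<noteq> 0" unfolding hv using T by simp
  show "(deriv ^^ 2) h (-1/2) \<noteq> 0" unfolding d2
  proof -
    have "1 - T^2 > 0" using T2 by simp
    then show "2 * T * (1 - T^2) \<noteq> 0" using T by simp
  qed
  show "(deriv h (-1/2))\<^sup>2 + h (-1/2) * (deriv ^^ 2) h (-1/2) > 0"
  proof -
    have "(deriv h (-1/2))\<^sup>2 + h (-1/2) * (deriv ^^ 2) h (-1/2) = (1 - T^2) * (1 - 3 * T^2)"
      unfolding hv dv d2 by (simp add: power2_eq_square algebra_simps)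
    moreover have "(1 - T^2) * (1 - 3 * T^2) > 0" using T2 by (intro mult_pos_pos) auto
    ultimately show ?thesis by linarith
  qed
qed

theorem corollary1:
  fixes h :: "real \<Rightarrow> real"
  assumes "h = sigmoid \<or> h = tanh \<or> h = arctan \<or> h = (\<lambda>x. x\<^sup>2) \<or>
           (\<exists>alpha lam. alpha > 0 \<and> (lam = 1 \<or> lam > 1) \<and> h = elu lam alpha)"
  shows
    "(\<exists>v1 v2 v3 v4 :: real. h v1 * h v4 = h v2 * h v3 \<and>
        h v1 * h ((v3 + v4) / 2) \<noteq> h v3 * h ((v1 + v2) / 2))
   \<and> (\<exists>v1 v2 u1 u2 :: real.
        u1 * h v1 + u2 * h v2 = 1/3 \<and>
        inf_diff_at h v1 \<and> inf_diff_at h v2 \<and>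
        (\<exists>c > 0. \<forall>n \<ge> 1. \<bar>(deriv ^^ n) h v1\<bar> \<le> c ^ n * fact n \<and>
                          \<bar>(deriv ^^ n) h v2\<bar> \<le> c ^ n * fact n) \<and>
        (u1 * deriv h v1)\<^sup>2 + u1 * (deriv ^^ 2) h v1 / 3 > 0 \<and>
        (u1 * deriv h v1 * u2 * deriv h v2)\<^sup>2 <
          ((u1 * deriv h v1)\<^sup>2 + u1 * (deriv ^^ 2) h v1 / 3) *
          ((u2 * deriv h v2)\<^sup>2 + u2 * (deriv ^^ 2) h v2 / 3))
   \<and> (\<exists>p. riskp h p = 0 \<and> (\<forall>q. riskp h p \<le> riskp h q))
   \<and> (\<exists>p. riskp h p = 1/3 \<and> (\<forall>\<^sub>F q in nhds p. riskp h p \<le> riskp h q))"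
proof -
  from assms consider (s) "h = sigmoid" | (t) "h = tanh" | (a) "h = arctan" | (q) "h = (\<lambda>x. x\<^sup>2)"
    | (e) alpha lam where "alpha > 0" "lam = 1 \<or> lam > 1" "h = elu lam alpha"
    by blast
  then show ?thesis
  proof cases
    case s
    show ?thesis unfolding s by (rule case_sigmoid)
  next
    case t
    show ?thesis unfolding t by (rule case_tanh)
  next
    case a
    show ?thesis unfolding a by (rule case_arctan)
  next
    case q
    show ?thesis unfolding q by (rule case_sq)
  next
    case e
    have "lam > 0" using e(2) by auto
    show ?thesis unfolding e(3) by (rule case_elu[OF e(1) \<open>lam > 0\<close>])
  qed
qed

end
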